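(* For positive integers $\ell'\le \ell$, \[ \frac{1}{\ell}\,\mathbb{E}|\mathscr{L}(\mathbf{X}_\ell)| \le \frac{1}{\ell'}\,\mathbb{E}|\mathscr{L}(\mathbf{X}_{\ell'})|. \]
   Context: Let $X_1,X_2,\dots$ be independent random variables with $X_j$ Poisson distributed with parameter $1/j$, and $\mathbf{X}_k=(X_1,\dots,X_k)$. For a finite list $\mathbf{c}=(c_1,\dots,c_k)$ of non-negative integers, $\mathscr{L}(\mathbf{c}) = \{m_1+2m_2+\cdots+km_k : 0\le m_j\le c_j \text{ for } j=1,\dots,k\}$, and $|\cdot|$ denotes cardinality. *)

theory Defs
  imports "HOL-Probability.Probability"
begin

text \<open>The set of subsums of a list c = (c_1,...,c_k), encoded as a function
  c :: nat => nat whose relevant values are c 1, ..., c k.\<close>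
definition subsums :: "nat \<Rightarrow> (nat \<Rightarrow> nat) \<Rightarrow> nat set" where
  "subsums k c = {(\<Sum>j\<in>{1..k}. j * m j) | m. \<forall>j\<in>{1..k}. m j \<le> c j}"

text \<open>Joint law of X_k = (X_1,...,X_k), X_j independent Poisson(1/j);
  coordinates outside {1..k} are fixed to 0.\<close>
definition X_pmf :: "nat \<Rightarrow> (nat \<Rightarrow> nat) pmf" where
  "X_pmf k = Pi_pmf {1..k} 0 (\<lambda>j. poisson_pmf (1 / real j))"

definition expected_card :: "nat \<Rightarrow> real" where
  "expected_card k = measure_pmf.expectation (X_pmf k) (\<lambda>c. real (card (subsums k c)))"

end

theory Submission
  imports Defs
begin


lemma poisson_mean:
  assumes r: "0 < r"
  shows "(\<integral>\<^sup>+y. ennreal (real y) \<partial>measure_pmf (poisson_pmf r)) = ennreal r"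
proof -
  define f where "f = (\<lambda>n::nat. real n * (r ^ n / fact n * exp (-r)))"
  have e1: "(\<lambda>n. f (Suc n)) = (\<lambda>n. (r * exp (-r)) * (r^n /\<^sub>R fact n))"
  proof
    fix n
    have "fact (Suc n) = (real n + 1) * (fact n :: real)" by (simp add: fact_Suc)
    moreover have "(fact n :: real) > 0" by simp
    ultimately show "f (Suc n) = (r * exp (-r)) * (r^n /\<^sub>R fact n)"
      by (simp add: f_def divide_simps)
  qed
  have e2: "(\<lambda>n. (r * exp (-r)) * (r^n /\<^sub>R fact n)) sums ((r * exp (-r)) * exp r)"
    by (rule sums_mult[OF exp_converges])
  have "(\<lambda>n. f (Suc n)) sums r"
  proof -
    have "(r * exp (-r)) * exp r = r" by (simp add: mult.assoc flip: exp_add)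
    thus ?thesis using e1 e2 by metis
  qed
  moreover have "f 0 = 0" by (simp add: f_def)
  ultimately have s: "f sums r" using sums_Suc_iff[of f r] by simp
  have "(\<integral>\<^sup>+y. ennreal (real y) \<partial>measure_pmf (poisson_pmf r)) = 
     (\<integral>\<^sup>+y. ennreal (f y) \<partial>count_space UNIV)"
    using r by (simp add: nn_integral_measure_pmf f_def ennreal_mult'[symmetric] mult.commute)
  also have "\<dots> = (\<Sum>y. ennreal (f y))" by (rule nn_integral_count_space_nat)
  also have "\<dots> = ennreal r"
    using s r by (intro suminf_ennreal_eq) (auto simp: f_def)
  finally show ?thesis .
qed


lemma subsums_finite: "finite (subsums k c)"
proof (rule finite_subset)
  show "subsums k c \<subseteq> {..(\<Sum>j\<in>{1..k}. j * c j)}"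
    by (auto simp: subsums_def intro!: sum_mono)
qed simp

lemma subsums_upd: "subsums k (f(Suc k := y)) = subsums k f"
  unfolding subsums_def by auto

lemma subsums_step: "card (subsums (Suc k) c) \<le> card (subsums k c) * (1 + c (Suc k))"
proof -
  have "subsums (Suc k) c \<subseteq> (\<lambda>(s,t). s + Suc k * t) ` (subsums k c \<times> {..c (Suc k)})"
  proof
    fix x assume "x \<in> subsums (Suc k) c"
    then obtain m where x: "x = (\<Sum>j\<in>{1..Suc k}. j * m j)" and m: "\<forall>j\<in>{1..Suc k}. m j \<le> c j"
      by (auto simp: subsums_def)
    have "x = (\<Sum>j\<in>{1..k}. j * m j) + Suc k * m (Suc k)"
      using x by (simp add: sum.cl_ivl_Suc)
    moreover have "(\<Sum>j\<in>{1..k}. j * m j) \<in> subsums k c"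
      using m by (auto simp: subsums_def)
    moreover have "m (Suc k) \<le> c (Suc k)" using m by auto
    ultimately show "x \<in> (\<lambda>(s,t). s + Suc k * t) ` (subsums k c \<times> {..c (Suc k)})"
      by force
  qed
  hence "card (subsums (Suc k) c) \<le> card ((\<lambda>(s,t). s + Suc k * t) ` (subsums k c \<times> {..c (Suc k)}))"
    by (intro card_mono) (auto simp: subsums_finite)
  also have "\<dots> \<le> card (subsums k c \<times> {..c (Suc k)})" by (rule card_image_le) (simp add: subsums_finite)
  also have "\<dots> = card (subsums k c) * (1 + c (Suc k))" by (simp add: card_cartesian_product)
  finally show ?thesis .
qed

definition F :: "nat \<Rightarrow> ennreal" where
  "F k = (\<integral>\<^sup>+c. ennreal (real (card (subsums k c))) \<partial>measure_pmf (X_pmf k))"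

lemma F_step: "F (Suc k) \<le> F k * ennreal (1 + 1 / real (Suc k))"
proof -
  let ?p = "\<lambda>j::nat. poisson_pmf (1 / real j)"
  have X: "X_pmf (Suc k) = map_pmf (\<lambda>(y,f). f(Suc k:=y)) (pair_pmf (?p (Suc k)) (X_pmf k))"
    unfolding X_pmf_def
    by (subst Pi_pmf_insert[symmetric]) (auto simp: atLeastAtMostSuc_conv)
  have "F (Suc k) = (\<integral>\<^sup>+y. \<integral>\<^sup>+f. ennreal (real (card (subsums (Suc k) (f(Suc k := y))))) \<partial>X_pmf k \<partial>?p (Suc k))"
    unfolding F_def X by (simp add: nn_integral_pair_pmf')
  also have "\<dots> \<le> (\<integral>\<^sup>+y. \<integral>\<^sup>+f. ennreal (real (1 + y)) * ennreal (real (card (subsums k f))) \<partial>X_pmf k \<partial>?p (Suc k))"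
  proof (intro nn_integral_mono)
    fix y f
    have "card (subsums (Suc k) (f(Suc k := y))) \<le> card (subsums k f) * (1 + y)"
      using subsums_step[of k "f(Suc k := y)"] by (simp add: subsums_upd)
    hence "real (card (subsums (Suc k) (f(Suc k := y)))) \<le> real (1 + y) * real (card (subsums k f))"
      by (metis mult.commute of_nat_le_iff of_nat_mult)
    thus "ennreal (real (card (subsums (Suc k) (f(Suc k := y))))) \<le> ennreal (real (1 + y)) * ennreal (real (card (subsums k f)))"
    proof -
      have "ennreal (real (card (subsums (Suc k) (f(Suc k := y))))) \<le> ennreal (real (1 + y) * real (card (subsums k f)))"
        by (rule ennreal_leI) fact
      also have "\<dots> = ennreal (real (1 + y)) * ennreal (real (card (subsums k f)))"
        by (rule ennreal_mult) simp_all
      finally show ?thesis .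
    qed
  qed
  also have "\<dots> = (\<integral>\<^sup>+y. ennreal (real (1 + y)) * F k \<partial>?p (Suc k))"
    by (simp add: nn_integral_cmult F_def)
  also have "\<dots> = F k * (\<integral>\<^sup>+y. ennreal (real (1 + y)) \<partial>?p (Suc k))"
    by (subst nn_integral_cmult[symmetric]) (auto simp: mult.commute)
  also have "(\<integral>\<^sup>+y. ennreal (real (1 + y)) \<partial>?p (Suc k)) = 1 + ennreal (1 / real (Suc k))"
  proof -
    have "(\<integral>\<^sup>+y. ennreal (real (1 + y)) \<partial>?p (Suc k)) = (\<integral>\<^sup>+y. 1 + ennreal (real y) \<partial>?p (Suc k))"
      by (intro nn_integral_cong) (simp add: ennreal_plus)
    also have "\<dots> = 1 + (\<integral>\<^sup>+y. ennreal (real y) \<partial>?p (Suc k))"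
      by (subst nn_integral_add) auto
    also have "\<dots> = 1 + ennreal (1 / real (Suc k))"
      by (subst poisson_mean) auto
    finally show ?thesis .
  qed
  also have "1 + ennreal (1 / real (Suc k)) = ennreal (1 + 1 / real (Suc k))"
    by (simp add: ennreal_plus)
  finally show ?thesis .
qed

lemma F_0: "F 0 = 1"
proof -
  have "subsums 0 c = {0}" for c by (auto simp: subsums_def)
  thus ?thesis by (simp add: F_def)
qed

lemma F_finite: "F k < \<top>"
proof (induction k)
  case 0 thus ?case by (simp add: F_0)
next
  case (Suc k)
  have "F (Suc k) \<le> F k * ennreal (1 + 1 / real (Suc k))" by (rule F_step)
  also have "\<dots> < \<top>" using Suc by (simp add: ennreal_mult_less_top)
  finally show ?case .
qed

lemma E_eq: "expected_card k = enn2real (F k)"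
  unfolding expected_card_def F_def
  by (rule integral_eq_nn_integral) auto

lemma E_step: "expected_card (Suc k) \<le> expected_card k * (1 + 1 / real (Suc k))"
proof -
  have "enn2real (F (Suc k)) \<le> enn2real (F k * ennreal (1 + 1 / real (Suc k)))"
    using F_step F_finite by (intro enn2real_mono) (auto simp: ennreal_mult_less_top)
  also have "\<dots> = enn2real (F k) * (1 + 1 / real (Suc k))"
    by (simp add: enn2real_mult del: ennreal_plus)
  finally show ?thesis by (simp add: E_eq)
qed

lemma E_nonneg: "0 \<le> expected_card k" by (simp add: E_eq)

lemma E_ratio_step:
  assumes "0 < k"
  shows "expected_card (Suc k) / real (Suc k) \<le> expected_card k / real k"
proof -
  define e where "e = expected_card k"
  have e0: "0 \<le> e" by (simp add: e_def E_nonneg)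
  have "expected_card (Suc k) / real (Suc k) \<le> e * (1 + 1 / real (Suc k)) / real (Suc k)"
    using E_step[of k] by (simp add: e_def divide_right_mono)
  also have "\<dots> = e * ((real k + 2) / (real k + 1)^2)"
    by (simp add: field_simps power2_eq_square)
  also have "\<dots> \<le> e * (1 / real k)"
  proof (rule mult_left_mono[OF _ e0])
    have "real k * (real k + 2) \<le> (real k + 1)^2" by (simp add: power2_eq_square algebra_simps)
    thus "(real k + 2) / (real k + 1)^2 \<le> 1 / real k"
      using assms by (simp add: divide_simps) (simp add: algebra_simps power2_eq_square)
  qed
  finally show ?thesis by (simp add: e_def)
qed

theorem lemma3p2:
  fixes l l' :: nat
  assumes "0 < l'" and "l' \<le> l"
  shows "expected_card l / real l \<le> expected_card l' / real l'"
  using assms(2)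
proof (induction l rule: dec_induct)
  case base thus ?case by simp
next
  case (step n)
  have "0 < n" using assms step by simp
  thus ?case using E_ratio_step[of n] step by linarith
qed

end
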